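(* Let $d>k\ge 0$ be integers with $d$ even and $k$ odd. Then $f(k,d)\le \frac{k+1}{d+2}$.
   Context: For a graph $G=(V,E)$ and an integer $k\ge 0$, a $k$-independent set is a set $S\subseteq V$ such that the induced subgraph $G[S]$ has maximum degree at most $k$; $\alpha_k(G)$ denotes the maximum cardinality of a $k$-independent set of $G$. $n(G)$ is the number of vertices and $d(G)=2|E(G)|/n(G)$ the average degree. For integers $d,k\ge 0$, $f(k,d)=\inf\left\{\frac{\alpha_k(G)}{n(G)} : G \text{ a finite simple graph with at least one vertex and } d(G)\le d\right\}$. *)

theory Defs
  imports Main "HOL-Library.Disjoint_Sets" Complex_Main
begin

text \<open>Vertices are taken to be natural numbers; every finite
  simple graph is isomorphic to one of these, and all quantities below are
  isomorphism invariant.\<close>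

definition simple_graph :: "nat set \<Rightarrow> nat set set \<Rightarrow> bool" where
  "simple_graph V E \<longleftrightarrow> finite V \<and> (\<forall>e\<in>E. e \<subseteq> V \<and> card e = 2)"

definition induced_degree :: "nat set set \<Rightarrow> nat set \<Rightarrow> nat \<Rightarrow> nat" where
  "induced_degree E S v = card {u \<in> S. {u, v} \<in> E}"

definition k_independent :: "nat set \<Rightarrow> nat set set \<Rightarrow> nat \<Rightarrow> nat set \<Rightarrow> bool" where
  "k_independent V E k S \<longleftrightarrow> S \<subseteq> V \<and> (\<forall>v\<in>S. induced_degree E S v \<le> k)"

definition alpha_k :: "nat set \<Rightarrow> nat set set \<Rightarrow> nat \<Rightarrow> nat" where
  "alpha_k V E k = Max (card ` {S. k_independent V E k S})"

definition avg_degree :: "nat set \<Rightarrow> nat set set \<Rightarrow> real" where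
  "avg_degree V E = 2 * real (card E) / real (card V)"

definition f_kd :: "nat \<Rightarrow> nat \<Rightarrow> real" where
  "f_kd k d = Inf {real (alpha_k V E k) / real (card V) | V E.
                    simple_graph V E \<and> V \<noteq> {} \<and> avg_degree V E \<le> real d}"

end

theory Submission
  imports Defs
begin

lemma sum_div2: "(\<Sum>v<2*m. (v::nat) div 2) + m = m*m"
proof (induction m)
  case 0 then show ?case by simp
next
  case (Suc m)
  have "{..<2*Suc m} = insert (2*m+1) (insert (2*m) {..<2*m})" by auto
  then have "(\<Sum>v<2*Suc m. v div 2) = (2*m+1) div 2 + (2*m) div 2 + (\<Sum>v<2*m. v div 2)"
    by simp
  then show ?case using Suc by simp
qed

lemma key_graph:
  fixes m k :: nat
  assumes m: "m \<ge> 1" and kodd: "odd k" and km: "k + 1 \<le> 2*m"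
  defines "V \<equiv> {..<2*m}"
  defines "P \<equiv> {(v,u). v < 2*m \<and> u < 2*(v div 2)}"
  defines "E \<equiv> (\<lambda>(v,u). {u,v::nat}) ` P"
  shows "simple_graph V E" "card E = 2*(m*m - m)" "\<And>S. k_independent V E k S \<Longrightarrow> card S \<le> k+1"
proof -
  have div2le: "\<And>a::nat. 2*(a div 2) \<le> a" by simp
  show "simple_graph V E"
    unfolding simple_graph_def V_def E_def P_def by auto
  have inj: "inj_on (\<lambda>(v,u). {u,v::nat}) P"
    unfolding inj_on_def
  proof (clarify)
    fix a b c d assume ab: "(b,a) \<in> P" and cd: "(d,c) \<in> P" and eq: "{a,b} = {c,d}"
    have "a < b" "c < d" using ab cd div2le[of b] div2le[of d] unfolding P_def by auto
    then show "b = d \<and> a = c" using eq by (auto simp: doubleton_eq_iff)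
  qed
  have "P = Sigma {..<2*m} (\<lambda>v. {..<2*(v div 2)})" unfolding P_def by auto
  then have "card P = (\<Sum>v<2*m. 2*(v div 2))" by (simp add: card_SigmaI)
  also have "\<dots> = 2 * (\<Sum>v<2*m. v div 2)" by (simp add: sum_distrib_left)
  finally have "card P = 2*(m*m - m)" using sum_div2[of m] by simp
  then show "card E = 2*(m*m - m)" unfolding E_def using card_image[OF inj] by simp
  have memE: "\<And>u v. u \<in> V \<Longrightarrow> v \<in> V \<Longrightarrow> {u,v} \<in> E \<longleftrightarrow> u div 2 \<noteq> v div 2"
  proof -
    fix u v assume uV: "u \<in> V" and vV: "v \<in> V"
    show "{u,v} \<in> E \<longleftrightarrow> u div 2 \<noteq> v div 2"
    proof
      assume "{u,v} \<in> E"
      then obtain a b where ab: "{u,v} = {a,b}" "a < 2*(b div 2)" unfolding E_def P_def by auto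
      then have "a div 2 \<noteq> b div 2" by linarith
      then show "u div 2 \<noteq> v div 2" using ab(1) by (auto simp: doubleton_eq_iff)
    next
      assume ne: "u div 2 \<noteq> v div 2"
      show "{u,v} \<in> E"
      proof (cases "u div 2 < v div 2")
        case True
        then have "(v,u) \<in> P" using vV unfolding P_def V_def by auto
        then show ?thesis unfolding E_def by force
      next
        case False
        then have "(u,v) \<in> P" using uV ne unfolding P_def V_def by auto
        then have "{v,u} \<in> E" unfolding E_def by force
        then show ?thesis by (simp add: insert_commute)
      qed
    qed
  qed
  show "card S \<le> k+1" if ind: "k_independent V E k S" for S
  proof (rule ccontr)
    assume "\<not> card S \<le> k+1"
    then have big: "card S \<ge> k+2" by simp
    have SV: "S \<subseteq> V" and deg: "\<And>v. v \<in> S \<Longrightarrow> induced_degree E S v \<le> k"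
      using ind unfolding k_independent_def by auto
    have finS: "finite S" using SV unfolding V_def by (rule finite_subset) simp
    have degeq: "induced_degree E S v = card (S - {2*(v div 2), 2*(v div 2)+1})" if "v \<in> S" for v
    proof -
      have "{u \<in> S. {u,v} \<in> E} = S - {2*(v div 2), 2*(v div 2)+1}"
      proof (rule set_eqI)
        fix u
        have ar: "u div 2 = v div 2 \<longleftrightarrow> u = 2*(v div 2) \<or> u = 2*(v div 2)+1" by presburger
        show "u \<in> {u \<in> S. {u,v} \<in> E} \<longleftrightarrow> u \<in> S - {2*(v div 2), 2*(v div 2)+1}"
        proof (cases "u \<in> S")
          case True
          then have "{u,v} \<in> E \<longleftrightarrow> u div 2 \<noteq> v div 2" using memE SV that by blast
          then show ?thesis using True ar by auto
        qed simp
      qed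
      then show ?thesis unfolding induced_degree_def by simp
    qed
    obtain v0 where v0: "v0 \<in> S" using big by fastforce
    have "card S - card {2*(v0 div 2), 2*(v0 div 2)+1} \<le> card (S - {2*(v0 div 2), 2*(v0 div 2)+1})"
      by (rule diff_card_le_card_Diff) simp
    then have "card S - 2 \<le> induced_degree E S v0" using degeq[OF v0] by (simp add: card_insert_if)
    then have cS: "card S = k+2" using deg[OF v0] big by linarith
    have "\<exists>v\<in>S. \<not> (2*(v div 2) \<in> S \<and> 2*(v div 2)+1 \<in> S)"
    proof (rule ccontr)
      assume "\<not> ?thesis"
      then have cl: "\<And>v. v \<in> S \<Longrightarrow> 2*(v div 2) \<in> S \<and> 2*(v div 2)+1 \<in> S" by blast
      define A where "A = S \<inter> {v. even v}"
      define B where "B = S \<inter> {v. odd v}"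
      have "B = Suc ` A"
      proof (rule set_eqI)
        fix x show "x \<in> B \<longleftrightarrow> x \<in> Suc ` A"
        proof
          assume "x \<in> B"
          then have xS: "x \<in> S" and xo: "odd x" unfolding B_def by auto
          have "x = Suc (2*(x div 2))" using xo by presburger
          moreover have "2*(x div 2) \<in> A" using cl[OF xS] unfolding A_def by auto
          ultimately show "x \<in> Suc ` A" by blast
        next
          assume "x \<in> Suc ` A"
          then obtain a where a: "a \<in> A" "x = Suc a" by blast
          then have "a \<in> S" "even a" unfolding A_def by auto
          then have "2*(a div 2) + 1 = x" using a(2) by presburger
          moreover have "odd x" using \<open>even a\<close> a(2) by simp
          ultimately show "x \<in> B" using cl[OF \<open>a \<in> S\<close>] unfolding B_def by auto
        qed
      qed
      then have "card B = card A" by (simp add: card_image)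
      moreover have "S = A \<union> B" "A \<inter> B = {}" unfolding A_def B_def by auto
      moreover have "finite A" "finite B" using finS unfolding A_def B_def by auto
      ultimately have "card S = 2 * card A" by (simp add: card_Un_disjoint)
      then show False using cS kodd by presburger
    qed
    then obtain v where vS: "v \<in> S" and miss: "\<not> (2*(v div 2) \<in> S \<and> 2*(v div 2)+1 \<in> S)" by blast
    have "v = 2*(v div 2) \<or> v = 2*(v div 2)+1" by presburger
    then have "S - {2*(v div 2), 2*(v div 2)+1} = S - {v}" using miss vS by auto
    then have "induced_degree E S v = k+1" using degeq[OF vS] cS finS vS by simp
    then show False using deg[OF vS] by simp
  qed
  qed


theorem mainTheorem9:
  fixes k d :: nat
  assumes "d > k" and "even d" and "odd k"
  shows "f_kd k d \<le> real (k + 1) / real (d + 2)"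
proof -
  define m where "m = d div 2 + 1"
  have dm: "d + 2 = 2*m" using assms(2) unfolding m_def by presburger
  define V where "V = {..<2*m}"
  define P where "P = {(v,u). v < 2*m \<and> u < 2*((v::nat) div 2)}"
  define E where "E = (\<lambda>(v,u). {u,v::nat}) ` P"
  have m1: "m \<ge> 1" "k + 1 \<le> 2*m" using dm assms(1) by auto
  note kg = key_graph[OF m1(1) assms(3) m1(2), folded V_def P_def, folded E_def]
  have cV: "card V = d+2" using dm unfolding V_def by simp
  have "avg_degree V E = 2 * real (2*(m*m-m)) / real (2*m)"
    unfolding avg_degree_def using kg(2) cV dm by simp
  also have "\<dots> = real d"
  proof -
    have "m*m - m = m*(m-1)" by (simp add: diff_mult_distrib2)
    then have "real (2*(m*m-m)) = real (2*m) * real (m-1)" by simp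
    moreover have "real (m-1) * 2 = real d" using dm m1 by (simp add: of_nat_diff)
    ultimately show ?thesis using m1 by simp
  qed
  finally have avg: "avg_degree V E \<le> real d" by simp
  have finK: "finite {S. k_independent V E k S}"
    unfolding k_independent_def V_def by (rule finite_subset[of _ "Pow {..<2*m}"]) auto
  have "{} \<in> {S. k_independent V E k S}" unfolding k_independent_def by simp
  then have al: "alpha_k V E k \<le> k+1"
    unfolding alpha_k_def using finK kg(3) by (subst Max_le_iff) auto
  have Vne: "V \<noteq> {}" using cV by auto
  have mem: "real (alpha_k V E k) / real (card V) \<in> {real (alpha_k V E k) / real (card V) | V E.
                    simple_graph V E \<and> V \<noteq> {} \<and> avg_degree V E \<le> real d}"
    using kg(1) Vne avg by blast
  have bdd: "bdd_below {real (alpha_k V E k) / real (card V) | V E.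
                    simple_graph V E \<and> V \<noteq> {} \<and> avg_degree V E \<le> real d}"
    by (rule bdd_belowI[of _ 0]) auto
  have "f_kd k d \<le> real (alpha_k V E k) / real (card V)"
    unfolding f_kd_def by (rule cInf_lower[OF mem bdd])
  also have "\<dots> \<le> real (k + 1) / real (d + 2)"
    using al cV by (simp add: divide_right_mono)
  finally show ?thesis .
qed

end
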